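(* Let $N=S_1\times\mathbb{R}_{>0}\times S_1$ with coordinates $(\theta,r,y)$ and metric $h=r^2(\mathrm{d}\theta)^2+(\mathrm{d}r)^2+r^{-8}(\mathrm{d}y)^2$. There exist a finite time $T>0$ and a solution $(v,p)$ of the incompressible Euler equation $\partial_t v+\nabla_v v=-\nabla p$, $\operatorname{div}_h v=0$ on $(N,h)$, smooth on $[0,T)\times N$ with smooth initial data, such that $\sup_{(\theta,r,y)\in N}|\partial_r v^r(t,\theta,r,y)|$ is unbounded as $t\uparrow T$, where $v^r$ is the $\partial_r$-component of $v$. In particular, the solution blows up in finite time.
   Context: $\nabla$ is the Levi-Civita connection of $h$, $\nabla p$ the $h$-gradient and $\operatorname{div}_h$ the divergence with respect to the Riemannian volume form of $h$. *)

theory Defs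
  imports "HOL-Analysis.Analysis"
begin

definition pd :: "'a::real_normed_vector \<Rightarrow> ('a \<Rightarrow> real) \<Rightarrow> 'a \<Rightarrow> real" where
  "pd b g x = deriv (\<lambda>s. g (x + s *\<^sub>R b)) 0"

text \<open>C-infinity on an open set U: there is a family of functions containing f, all
  continuous on U, closed under taking partial derivatives along the standard basis
  (i.e. all iterated partial derivatives exist on U and are continuous).\<close>
definition C_inf_on :: "'a::euclidean_space set \<Rightarrow> ('a \<Rightarrow> real) \<Rightarrow> bool" where
  "C_inf_on U f \<longleftrightarrow> (\<exists>F. f \<in> F \<and> (\<forall>g\<in>F. continuous_on U g \<and>
      (\<forall>b\<in>Basis. \<exists>g'\<in>F. \<forall>x\<in>U. ((\<lambda>s. g (x + s *\<^sub>R b)) has_real_derivative g' x) (at 0))))"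

text \<open>Coordinates (t, theta, r, y) on the time-space R x R x R x R; N = S1 x R_{>0} x S1
  is represented by periodic functions (period 2 pi in theta and y), r > 0.\<close>
definition e_t :: "real \<times> real \<times> real \<times> real" where "e_t = (1,0,0,0)"
definition e_th :: "real \<times> real \<times> real \<times> real" where "e_th = (0,1,0,0)"
definition e_r :: "real \<times> real \<times> real \<times> real" where "e_r = (0,0,1,0)"
definition e_y :: "real \<times> real \<times> real \<times> real" where "e_y = (0,0,0,1)"

definition dom_N :: "real \<Rightarrow> (real \<times> real \<times> real \<times> real) set" where
  "dom_N T = {(t,th,r,y). 0 \<le> t \<and> t < T \<and> 0 < r}"

definition periodic_N :: "(real \<times> real \<times> real \<times> real \<Rightarrow> real) \<Rightarrow> bool" where
  "periodic_N f \<longleftrightarrow> (\<forall>t th r y. f (t, th + 2*pi, r, y) = f (t, th, r, y)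
                               \<and> f (t, th, r, y + 2*pi) = f (t, th, r, y))"

text \<open>Incompressible Euler equations on (N,h), h = r^2 dth^2 + dr^2 + r^(-8) dy^2, written
  in coordinates: v = vth d_th + vr d_r + vy d_y.  Christoffel symbols:
  Gamma^r_thth = -r, Gamma^th_thr = 1/r, Gamma^r_yy = 4 r^(-9), Gamma^y_yr = -4/r;
  grad p = r^(-2) p_th d_th + p_r d_r + r^8 p_y d_y;  sqrt(det h) = r^(-3), so
  div_h v = d_th vth + d_r vr + d_y vy - 3 vr / r.\<close>
definition euler_N ::
  "real \<Rightarrow> (real \<times> real \<times> real \<times> real \<Rightarrow> real) \<Rightarrow> (real \<times> real \<times> real \<times> real \<Rightarrow> real)
   \<Rightarrow> (real \<times> real \<times> real \<times> real \<Rightarrow> real) \<Rightarrow> (real \<times> real \<times> real \<times> real \<Rightarrow> real) \<Rightarrow> bool" where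
  "euler_N T vth vr vy p \<longleftrightarrow> (\<forall>x\<in>dom_N T. let r = fst (snd (snd x));
       a = vth x; b = vr x; c = vy x;
       adv = (\<lambda>f. a * pd e_th f x + b * pd e_r f x + c * pd e_y f x) in
     pd e_t vth x + adv vth + 2 * a * b / r = - (pd e_th p x / r^2) \<and>
     pd e_t vr x + adv vr - r * a^2 + 4 * c^2 / r^9 = - pd e_r p x \<and>
     pd e_t vy x + adv vy - 8 * b * c / r = - (r^8 * pd e_y p x) \<and>
     pd e_th vth x + pd e_r vr x + pd e_y vy x - 3 * b / r = 0)"

end

theory Submission imports Defs begin


lemma param_deriv:
  fixes h h' :: "real \<Rightarrow> real \<Rightarrow> real" and S :: "real set"
  assumes ab: "a < x0" "x0 < b"
  and hd: "\<And>x t. a < x \<Longrightarrow> x < b \<Longrightarrow> t \<in> S \<Longrightarrow> ((\<lambda>x. h x t) has_real_derivative h' x t) (at x)"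
  and hi: "\<And>x. a < x \<Longrightarrow> x < b \<Longrightarrow> h x integrable_on S"
  and hb: "\<And>x t. a < x \<Longrightarrow> x < b \<Longrightarrow> t \<in> S \<Longrightarrow> \<bar>h' x t\<bar> \<le> g t"
  and gi: "g integrable_on S"
  shows "((\<lambda>x. integral S (h x)) has_real_derivative integral S (h' x0)) (at x0)"
proof -
  let ?F = "\<lambda>x. integral S (h x)"
  let ?Q = "\<lambda>y. (?F y - ?F x0) / (y - x0)"
  have "(?Q \<longlongrightarrow> integral S (h' x0)) (at x0)"
  proof (subst tendsto_at_iff_sequentially, intro allI impI)
    fix X :: "nat \<Rightarrow> real" assume X: "\<forall>i. X i \<in> UNIV - {x0}" "X \<longlonglongrightarrow> x0"
    define c where "c = (x0 + b)/2"
    define Y where "Y i = (if a < X i \<and> X i < b then X i else c)" for i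
    have ev: "eventually (\<lambda>i. a < X i \<and> X i < b) sequentially"
      using X(2) ab by (intro eventually_conj order_tendstoD) auto
    have c: "a < c" "c < b" "c \<noteq> x0" using ab by (auto simp: c_def)
    have Yin: "a < Y i" "Y i < b" "Y i \<noteq> x0" for i
      using X(1) c by (auto simp: Y_def)
    have evY: "eventually (\<lambda>i. X i = Y i) sequentially"
      using ev by eventually_elim (auto simp: Y_def)
    have Ylim: "Y \<longlonglongrightarrow> x0"
      using X(2) evY by (rule Lim_transform_eventually)
    define D where "D i t = (h (Y i) t - h x0 t) / (Y i - x0)" for i t
    have Dint: "D i integrable_on S" for i
      unfolding D_def using hi[OF Yin(1,2)] hi[OF ab]
      by (intro integrable_on_divide integrable_diff) auto
    have Dbound: "norm (D i t) \<le> g t" if t: "t \<in> S" for i t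
    proof -
      have "norm (h (Y i) t - h x0 t) \<le> g t * norm (Y i - x0)"
      proof (rule field_differentiable_bound[of "{a<..<b}" "\<lambda>x. h x t" "\<lambda>x. h' x t"])
        show "convex {a<..<b}" by simp
        show "((\<lambda>x. h x t) has_field_derivative h' x t) (at x within {a<..<b})" if "x \<in> {a<..<b}" for x
          using hd[of x t] that t by (auto intro: has_field_derivative_at_within)
        show "norm (h' x t) \<le> g t" if "x \<in> {a<..<b}" for x using hb[of x t] that t by auto
      qed (use Yin ab in auto)
      then show ?thesis using Yin(3)[of i]
        by (simp add: D_def divide_le_eq abs_divide mult.commute)
    qed
    have Dconv: "(\<lambda>i. D i t) \<longlonglongrightarrow> h' x0 t" if t: "t \<in> S" for t
    proof -
      have "((\<lambda>y. (h y t - h x0 t) / (y - x0)) \<longlongrightarrow> h' x0 t) (at x0)"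
        using hd[OF ab t] by (simp add: has_field_derivative_iff)
      then have "((\<lambda>y. (h y t - h x0 t) / (y - x0)) \<circ> Y) \<longlonglongrightarrow> h' x0 t"
        using Ylim Yin(3) by (subst (asm) tendsto_at_iff_sequentially) auto
      then show ?thesis by (simp add: D_def o_def)
    qed
    have lim: "(\<lambda>i. integral S (D i)) \<longlonglongrightarrow> integral S (h' x0)"
      using dominated_convergence(2)[OF Dint gi Dbound Dconv] by simp
    have eqD: "integral S (D i) = ?Q (Y i)" for i
      unfolding D_def using hi[OF Yin(1,2)] hi[OF ab]
      by (simp add: integral_divide integral_diff)
    have "(\<lambda>i. ?Q (Y i)) \<longlonglongrightarrow> integral S (h' x0)" using lim by (simp add: eqD)
    moreover have "eventually (\<lambda>i. ?Q (Y i) = ?Q (X i)) sequentially"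
      using evY by eventually_elim simp
    ultimately show "(?Q \<circ> X) \<longlonglongrightarrow> integral S (h' x0)"
      unfolding o_def by (rule Lim_transform_eventually)
  qed
  then show ?thesis by (simp add: has_field_derivative_iff)
qed




lemma exp_neg_le1: "0 < w \<Longrightarrow> exp (-w) \<le> 1/(w::real)"
proof -
  assume w: "0 < w"
  have "w \<le> exp w" using exp_ge_add_one_self[of w] by linarith
  then show ?thesis using w by (simp add: exp_minus field_simps)
qed

lemma exp_neg_le2: "0 < w \<Longrightarrow> exp (-w) \<le> 2/(w::real)^2"
proof -
  assume w: "0 < w"
  have "w^2/2 \<le> exp w" using exp_lower_Taylor_quadratic[of w] w by linarith
  then show ?thesis using w by (simp add: exp_minus field_simps)
qed

lemma exp_t5: "0 \<le> t \<Longrightarrow> exp (-(t^5)) \<le> exp 1 * exp (-(t::real))"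
proof -
  assume t: "0 \<le> t"
  have "t - 1 \<le> t^5"
  proof (cases "t \<le> 1")
    case True then show ?thesis using t by (smt (verit) zero_le_power)
  next
    case False
    then have "t^1 \<le> t^5" by (intro power_increasing) auto
    then show ?thesis by simp
  qed
  then have "-(t^5) \<le> 1 + (-t)" by linarith
  then show ?thesis by (simp add: exp_add[symmetric])
qed

definition gd :: "real \<Rightarrow> real" where "gd t = (1 + t^5) * exp (- t)"

lemma gd_pos: "0 \<le> t \<Longrightarrow> 0 \<le> gd t" by (simp add: gd_def)

lemma gd_integrable: "gd integrable_on {0<..}"
proof -
  have 1: "(\<lambda>t::real. t powr (1 - 1) / exp t) integrable_on {0..}"
    using has_integral_integrable[OF Gamma_integral_real[of 1]] by simp
  have 6: "(\<lambda>t::real. t powr (6 - 1) / exp t) integrable_on {0..}"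
    by (rule has_integral_integrable[OF Gamma_integral_real]) simp
  have "(\<lambda>t::real. t powr (1 - 1) / exp t + t powr (6 - 1) / exp t) integrable_on {0..}"
    by (rule integrable_add[OF 1 6])
  then have "(\<lambda>t::real. t powr (1 - 1) / exp t + t powr (6 - 1) / exp t) integrable_on {0<..}"
    by (rule integrable_spike_set) (auto intro: negligible_subset[of "{0}"])
  then show ?thesis
    by (rule integrable_eq) (auto simp: gd_def exp_minus field_simps powr_realpow)
qed

lemma integrable_dom:
  fixes f :: "real \<Rightarrow> real"
  assumes "continuous_on {0<..} f" "\<And>t. 0 < t \<Longrightarrow> \<bar>f t\<bar> \<le> C * gd t"
  shows "f integrable_on {0<..}"
proof (rule measurable_bounded_by_integrable_imp_integrable)
  show "f \<in> borel_measurable (lebesgue_on {0<..})"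
    by (rule continuous_imp_measurable_on_sets_lebesgue[OF assms(1)]) auto
  show "(\<lambda>t. C * gd t) integrable_on {0<..}"
    using integrable_on_cmult_left[OF gd_integrable, of C] by simp
qed (use assms in auto)




definition EE :: "real \<Rightarrow> real \<Rightarrow> real" where
  "EE q t = exp (-(t^5)) * exp (-(q/t^5))"
definition kG :: "real \<Rightarrow> real \<Rightarrow> real" where "kG q t = t * EE q t"
definition kH :: "real \<Rightarrow> real \<Rightarrow> real" where "kH q t = EE q t / t^4"
definition kK :: "real \<Rightarrow> real \<Rightarrow> real" where "kK q t = EE q t / t^9"

lemma EE_pos: "0 < EE q t" by (simp add: EE_def)

lemma EE_le: assumes "0 < t" "0 < q1" "q1 \<le> q"
  shows "EE q t \<le> exp (-(t^5)) * exp (-(q1/t^5))"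
proof -
  have "q1/t^5 \<le> q/t^5" using assms by (simp add: divide_right_mono)
  then show ?thesis unfolding EE_def by (intro mult_left_mono) auto
qed

lemma t_le_gd: "0 < t \<Longrightarrow> t * exp (-(t^5)) \<le> exp 1 * gd t"
proof -
  assume t: "0 < t"
  have "t \<le> 1 + t^5"
  proof (cases "t \<le> 1")
    case False then have "t^1 \<le> t^5" by (intro power_increasing) auto
    then show ?thesis by simp
  next
    case True
    have "0 \<le> t^5" using t by simp
    then show ?thesis using True by linarith
  qed
  then have "t * exp (-(t^5)) \<le> (1 + t^5) * (exp 1 * exp (-t))"
    using exp_t5[of t] t by (intro mult_mono) auto
  then show ?thesis by (simp add: gd_def mult_ac)
qed

lemma one_le_gd: "0 < t \<Longrightarrow> exp (-(t^5)) \<le> exp 1 * gd t"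
proof -
  assume t: "0 < t"
  have "exp (-(t^5)) \<le> 1 * (exp 1 * exp (-t))" using exp_t5[of t] t by simp
  also have "\<dots> \<le> (1 + t^5) * (exp 1 * exp (-t))" using t by (intro mult_right_mono) auto
  finally show ?thesis by (simp add: gd_def mult_ac)
qed

lemma kG_bound: assumes "0 < t" "0 < q1" "q1 \<le> q" shows "\<bar>kG q t\<bar> \<le> exp 1 * gd t"
proof -
  have "EE q t \<le> exp (-(t^5)) * exp (-(q1/t^5))" by (rule EE_le[OF assms])
  also have "\<dots> \<le> exp (-(t^5)) * 1" using assms by (intro mult_left_mono) auto
  finally have "kG q t \<le> t * exp (-(t^5))"
    unfolding kG_def using assms(1) by (intro mult_left_mono) auto
  also have "\<dots> \<le> exp 1 * gd t" by (rule t_le_gd[OF assms(1)])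
  finally show ?thesis using EE_pos[of q t] assms(1) by (simp add: kG_def)
qed

lemma kH_bound: assumes "0 < t" "0 < q1" "q1 \<le> q" shows "\<bar>kH q t\<bar> \<le> exp 1 / q1 * gd t"
proof -
  have e: "exp (-(q1/t^5)) \<le> 1/(q1/t^5)" using assms by (intro exp_neg_le1) auto
  have "kH q t \<le> exp (-(t^5)) * exp (-(q1/t^5)) / t^4"
    unfolding kH_def using EE_le[OF assms] assms(1) by (simp add: divide_right_mono)
  also have "\<dots> \<le> exp (-(t^5)) * (1/(q1/t^5)) / t^4"
    using e assms(1) by (intro divide_right_mono mult_left_mono) auto
  also have "\<dots> = (t * exp (-(t^5))) / q1" using assms by (simp add: field_simps power_eq_if)
  also have "\<dots> \<le> exp 1 * gd t / q1" using t_le_gd[OF assms(1)] assms by (simp add: divide_right_mono)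
  finally show ?thesis using EE_pos[of q t] assms(1) by (simp add: kH_def)
qed

lemma kK_bound: assumes "0 < t" "0 < q1" "q1 \<le> q" shows "\<bar>kK q t\<bar> \<le> 2 * exp 1 / q1^2 * gd t"
proof -
  have e: "exp (-(q1/t^5)) \<le> 2/(q1/t^5)^2" using assms by (intro exp_neg_le2) auto
  have "kK q t \<le> exp (-(t^5)) * exp (-(q1/t^5)) / t^9"
    unfolding kK_def using EE_le[OF assms] assms(1) by (simp add: divide_right_mono)
  also have "\<dots> \<le> exp (-(t^5)) * (2/(q1/t^5)^2) / t^9"
    using e assms(1) by (intro divide_right_mono mult_left_mono) auto
  also have "\<dots> = 2 * (t * exp (-(t^5))) / q1^2" using assms by (simp add: field_simps power_eq_if)
  also have "\<dots> \<le> 2 * (exp 1 * gd t) / q1^2" using t_le_gd[OF assms(1)] assms by (simp add: divide_right_mono)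
  finally show ?thesis using EE_pos[of q t] assms(1) by (simp add: kK_def)
qed

lemma cont_EE: "continuous_on {0<..} (EE q)"
  unfolding EE_def by (intro continuous_intros) auto

lemma kG_int: "0 < q \<Longrightarrow> kG q integrable_on {0<..}"
proof -
  assume q: "0 < q"
  show ?thesis
    by (rule integrable_dom[where C="exp 1"])
       (use q in \<open>auto simp: kG_def intro!: continuous_intros cont_EE kG_bound[unfolded kG_def, of _ q]\<close>)
qed




lemma kH_int: assumes q: "0 < q" shows "kH q integrable_on {0<..}"
proof (rule integrable_dom[where C="exp 1 / q"])
  show "continuous_on {0<..} (kH q)" unfolding kH_def by (intro continuous_intros cont_EE) auto
  show "\<bar>kH q t\<bar> \<le> exp 1 / q * gd t" if "0 < t" for t by (rule kH_bound) (use q that in auto)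
qed

lemma kK_int: assumes q: "0 < q" shows "kK q integrable_on {0<..}"
proof (rule integrable_dom[where C="2 * exp 1 / q^2"])
  show "continuous_on {0<..} (kK q)" unfolding kK_def by (intro continuous_intros cont_EE) auto
  show "\<bar>kK q t\<bar> \<le> 2 * exp 1 / q^2 * gd t" if "0 < t" for t by (rule kK_bound) (use q that in auto)
qed

lemma r8_bound: assumes r: "0 < (r::real)" and t: "0 < (t::real)"
  shows "r^8 * exp (-((r^10/100)/t^5)) \<le> 100 * t^4"
proof (cases "r^2 \<le> t")
  case True
  have "r^8 = (r^2)^4" by simp
  also have "\<dots> \<le> t^4" using True r by (metis power_mono zero_le_power2)
  finally have "r^8 \<le> t^4" .
  moreover have "exp (-((r^10/100)/t^5)) \<le> 1" using r t by simp
  ultimately have "r^8 * exp (-((r^10/100)/t^5)) \<le> t^4 * 1"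
    using r by (intro mult_mono) auto
  moreover have "t^4 \<le> 100 * t^4" using t by simp
  ultimately show ?thesis by linarith
next
  case False
  have w: "0 < (r^10/100)/t^5" using r t by simp
  have "exp (-((r^10/100)/t^5)) \<le> 1/((r^10/100)/t^5)" by (rule exp_neg_le1[OF w])
  then have "r^8 * exp (-((r^10/100)/t^5)) \<le> r^8 * (1/((r^10/100)/t^5))"
    using r by (intro mult_left_mono) auto
  also have "\<dots> = 100 * t^4 * (t / r^2)" using r t by (simp add: field_simps power_eq_if)
  also have "\<dots> \<le> 100 * t^4 * 1" using False t r by (intro mult_left_mono) auto
  finally show ?thesis by simp
qed

lemma r8_kG: assumes "0 < r" "0 < t" shows "\<bar>r^8 * kG (r^10/100) t\<bar> \<le> 100 * exp 1 * gd t"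
proof -
  have "r^8 * kG (r^10/100) t = (r^8 * exp (-((r^10/100)/t^5))) * (t * exp (-(t^5)))"
    by (simp add: kG_def EE_def mult_ac)
  also have "\<dots> \<le> (100 * t^4) * (t * exp (-(t^5)))"
    using r8_bound[OF assms] assms by (intro mult_right_mono) auto
  also have "\<dots> = 100 * (t^5 * exp (-(t^5)))" by (simp add: power_eq_if)
  also have "\<dots> \<le> 100 * (exp 1 * gd t)"
  proof -
    have "t^5 * exp (-(t^5)) \<le> (1 + t^5) * (exp 1 * exp (-t))"
      using exp_t5[of t] assms by (intro mult_mono) auto
    then have "t^5 * exp (-(t^5)) \<le> exp 1 * gd t" by (simp add: gd_def mult_ac)
    then show ?thesis by simp
  qed
  finally have *: "r^8 * kG (r^10/100) t \<le> 100 * exp 1 * gd t" by simp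
  have "0 \<le> r^8 * kG (r^10/100) t" using EE_pos[of "r^10/100" t] assms by (simp add: kG_def)
  then show ?thesis using * by simp
qed

lemma r8_kH: assumes "0 < r" "0 < t" shows "\<bar>r^8 * kH (r^10/100) t\<bar> \<le> 100 * exp 1 * gd t"
proof -
  have "r^8 * kH (r^10/100) t = (r^8 * exp (-((r^10/100)/t^5))) * exp (-(t^5)) / t^4"
    by (simp add: kH_def EE_def mult_ac)
  also have "\<dots> \<le> (100 * t^4) * exp (-(t^5)) / t^4"
    using r8_bound[OF assms] assms by (intro divide_right_mono mult_right_mono) auto
  also have "\<dots> = 100 * exp (-(t^5))" using assms by simp
  also have "\<dots> \<le> 100 * (exp 1 * gd t)" using one_le_gd[OF assms(2)] by simp
  finally have *: "r^8 * kH (r^10/100) t \<le> 100 * exp 1 * gd t" by simp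
  have "0 \<le> r^8 * kH (r^10/100) t" using EE_pos[of "r^10/100" t] assms by (simp add: kH_def)
  then show ?thesis using * by simp
qed




definition Gf :: "real \<Rightarrow> real" where "Gf r = integral {0<..} (kG (r^10/100))"
definition Hf :: "real \<Rightarrow> real" where "Hf r = integral {0<..} (kH (r^10/100))"
definition Kf :: "real \<Rightarrow> real" where "Kf r = integral {0<..} (kK (r^10/100))"

lemma deriv_expq: "0 < t \<Longrightarrow> ((\<lambda>x. exp (-((x^10/100)/t^5))) has_real_derivative
    exp (-((x^10/100)/t^5)) * (-(x^9/10)/t^5)) (at x)"
  by (auto intro!: derivative_eq_intros simp: field_simps)

lemma deriv_kG: "0 < t \<Longrightarrow> ((\<lambda>x. kG (x^10/100) t) has_real_derivative -(x^9/10) * kH (x^10/100) t) (at x)"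
  unfolding kG_def kH_def EE_def
  by (rule derivative_eq_intros deriv_expq | assumption | simp)+ (simp add: field_simps power_eq_if)

lemma deriv_kH: "0 < t \<Longrightarrow> ((\<lambda>x. kH (x^10/100) t) has_real_derivative -(x^9/10) * kK (x^10/100) t) (at x)"
  unfolding kK_def kH_def EE_def
  by (rule derivative_eq_intros deriv_expq | assumption | simp)+ (simp add: field_simps power_eq_if)

lemma q_mono: assumes "0 < (r::real)" "r/2 < x" shows "(r/2)^10/100 \<le> x^10/100"
proof -
  have "(r/2)^10 \<le> x^10" using assms by (intro power_mono) auto
  then show ?thesis by simp
qed

lemma x9_bound: assumes "0 < (r::real)" "r/2 < x" "x < 2*r" shows "\<bar>-(x^9/10)\<bar> \<le> (2*r)^9/10"
proof -
  have "x^9 \<le> (2*r)^9" using assms by (intro power_mono) auto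
  then show ?thesis using assms by simp
qed

lemma DERIV_Gf: assumes r: "0 < r" shows "(Gf has_real_derivative -(r^9/10) * Hf r) (at r)"
proof -
  define q1 where "q1 = (r/2)^10/100"
  have q1: "0 < q1" using r by (simp add: q1_def)
  have "((\<lambda>x. integral {0<..} (kG (x^10/100))) has_real_derivative
          integral {0<..} (\<lambda>t. -(r^9/10) * kH (r^10/100) t)) (at r)"
  proof (rule param_deriv[where a="r/2" and b="2*r" and h'="\<lambda>x t. -(x^9/10) * kH (x^10/100) t"
              and g="\<lambda>t. (2*r)^9/10 * (exp 1 / q1) * gd t"])
    show "r/2 < r" "r < 2*r" using r by auto
    show "((\<lambda>x. kG (x^10/100) t) has_real_derivative -(x^9/10) * kH (x^10/100) t) (at x)"
      if "t \<in> {0<..}" for x t using that by (intro deriv_kG) auto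
    show "kG (x^10/100) integrable_on {0<..}" if "r/2 < x" "x < 2*r" for x
      using that r by (intro kG_int) auto
    show "\<bar>-(x^9/10) * kH (x^10/100) t\<bar> \<le> (2*r)^9/10 * (exp 1 / q1) * gd t"
      if x: "r/2 < x" "x < 2*r" and t: "t \<in> {0<..}" for x t
    proof -
      have "\<bar>kH (x^10/100) t\<bar> \<le> exp 1 / q1 * gd t"
        using t q1 q_mono[OF r x(1)] by (intro kH_bound) (auto simp: q1_def)
      then have "\<bar>-(x^9/10)\<bar> * \<bar>kH (x^10/100) t\<bar> \<le> (2*r)^9/10 * (exp 1 / q1 * gd t)"
        using x9_bound[OF r x] r by (intro mult_mono) auto
      then show ?thesis by (simp add: abs_mult mult_ac)
    qed
    show "(\<lambda>t. (2*r)^9/10 * (exp 1 / q1) * gd t) integrable_on {0<..}"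
      using integrable_on_cmult_left[OF gd_integrable, of "(2*r)^9/10 * (exp 1 / q1)"] by simp
  qed
  then show ?thesis by (simp add: Gf_def[abs_def] Hf_def)
qed

lemma DERIV_Hf: assumes r: "0 < r" shows "(Hf has_real_derivative -(r^9/10) * Kf r) (at r)"
proof -
  define q1 where "q1 = (r/2)^10/100"
  have q1: "0 < q1" using r by (simp add: q1_def)
  have "((\<lambda>x. integral {0<..} (kH (x^10/100))) has_real_derivative
          integral {0<..} (\<lambda>t. -(r^9/10) * kK (r^10/100) t)) (at r)"
  proof (rule param_deriv[where a="r/2" and b="2*r" and h'="\<lambda>x t. -(x^9/10) * kK (x^10/100) t"
              and g="\<lambda>t. (2*r)^9/10 * (2 * exp 1 / q1^2) * gd t"])
    show "r/2 < r" "r < 2*r" using r by auto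
    show "((\<lambda>x. kH (x^10/100) t) has_real_derivative -(x^9/10) * kK (x^10/100) t) (at x)"
      if "t \<in> {0<..}" for x t using that by (intro deriv_kH) auto
    show "kH (x^10/100) integrable_on {0<..}" if "r/2 < x" "x < 2*r" for x
      using that r by (intro kH_int) auto
    show "\<bar>-(x^9/10) * kK (x^10/100) t\<bar> \<le> (2*r)^9/10 * (2 * exp 1 / q1^2) * gd t"
      if x: "r/2 < x" "x < 2*r" and t: "t \<in> {0<..}" for x t
    proof -
      have "\<bar>kK (x^10/100) t\<bar> \<le> 2 * exp 1 / q1^2 * gd t"
        using t q1 q_mono[OF r x(1)] by (intro kK_bound) (auto simp: q1_def)
      then have "\<bar>-(x^9/10)\<bar> * \<bar>kK (x^10/100) t\<bar> \<le> (2*r)^9/10 * (2 * exp 1 / q1^2 * gd t)"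
        using x9_bound[OF r x] r by (intro mult_mono) auto
      then show ?thesis by (simp add: abs_mult mult_ac)
    qed
    show "(\<lambda>t. (2*r)^9/10 * (2 * exp 1 / q1^2) * gd t) integrable_on {0<..}"
      using integrable_on_cmult_left[OF gd_integrable, of "(2*r)^9/10 * (2 * exp 1 / q1^2)"] by simp
  qed
  then show ?thesis by (simp add: Hf_def[abs_def] Kf_def)
qed




definition phi :: "real \<Rightarrow> real \<Rightarrow> real" where "phi q t = EE q t / t^3"
definition psi :: "real \<Rightarrow> real \<Rightarrow> real" where
  "psi q t = -5 * kG q t + 5 * q * kK q t - 3 * kH q t"

lemma deriv_phi: "0 < t \<Longrightarrow> (phi q has_real_derivative psi q t) (at t)"
  unfolding phi_def psi_def kG_def kK_def kH_def EE_def
  by (rule derivative_eq_intros refl | simp)+ (simp add: field_simps power_eq_if)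

lemma psi_parts: assumes q: "0 < q"
  shows "(\<lambda>t. -5 * kG q t) integrable_on {0<..}" "(\<lambda>t. 5 * q * kK q t) integrable_on {0<..}"
        "(\<lambda>t. 3 * kH q t) integrable_on {0<..}"
  using integrable_on_cmult_left[OF kG_int[OF q], of "-5"]
        integrable_on_cmult_left[OF kK_int[OF q], of "5*q"]
        integrable_on_cmult_left[OF kH_int[OF q], of "3"] by simp_all

lemma psi_int: "0 < q \<Longrightarrow> psi q integrable_on {0<..}"
  unfolding psi_def using psi_parts
  by (intro integrable_diff integrable_add) auto

lemma psi_integral: assumes q: "0 < q"
  shows "integral {0<..} (psi q) = -5 * integral {0<..} (kG q) + 5 * q * integral {0<..} (kK q) - 3 * integral {0<..} (kH q)"
proof -
  note p = psi_parts[OF q]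
  have e1: "integral {0<..} (\<lambda>t. -5 * kG q t + 5 * q * kK q t - 3 * kH q t) =
      integral {0<..} (\<lambda>t. -5 * kG q t + 5 * q * kK q t) - integral {0<..} (\<lambda>t. 3 * kH q t)"
    by (rule integral_diff[OF integrable_add[OF p(1,2)] p(3)])
  have e2: "integral {0<..} (\<lambda>t. -5 * kG q t + 5 * q * kK q t) =
      integral {0<..} (\<lambda>t. -5 * kG q t) + integral {0<..} (\<lambda>t. 5 * q * kK q t)"
    by (rule integral_add[OF p(1,2)])
  show ?thesis unfolding psi_def e1 e2 integral_mult_right by simp
qed

lemma psi_bound: assumes "0 < q" "0 < t"
  shows "\<bar>psi q t\<bar> \<le> (5 * exp 1 + 5 * q * (2 * exp 1 / q^2) + 3 * (exp 1 / q)) * gd t"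
proof -
  have a: "\<bar>kG q t\<bar> \<le> exp 1 * gd t" by (rule kG_bound) (use assms in auto)
  have b: "\<bar>kK q t\<bar> \<le> 2 * exp 1 / q^2 * gd t" by (rule kK_bound) (use assms in auto)
  have c: "\<bar>kH q t\<bar> \<le> exp 1 / q * gd t" by (rule kH_bound) (use assms in auto)
  have "\<bar>psi q t\<bar> \<le> \<bar>-5 * kG q t\<bar> + \<bar>5 * q * kK q t\<bar> + \<bar>3 * kH q t\<bar>"
    unfolding psi_def by (smt (verit, best))
  also have "\<dots> = 5 * \<bar>kG q t\<bar> + 5 * q * \<bar>kK q t\<bar> + 3 * \<bar>kH q t\<bar>"
    using assms by (simp add: abs_mult)
  also have "\<dots> \<le> 5 * (exp 1 * gd t) + 5 * q * (2 * exp 1 / q^2 * gd t) + 3 * (exp 1 / q * gd t)"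
    using a b c assms by (intro add_mono mult_left_mono) auto
  finally show ?thesis by (simp add: algebra_simps)
qed

lemma phi_le1: "0 < t \<Longrightarrow> 0 < q \<Longrightarrow> phi q t \<le> 1 / t^3"
  unfolding phi_def EE_def
  by (intro divide_right_mono) (auto intro: mult_le_one)

lemma phi_le2: assumes "0 < t" "0 < q" shows "phi q t \<le> 2 * t^7 / q^2"
proof -
  have e: "exp (-(q/t^5)) \<le> 2/(q/t^5)^2" using assms by (intro exp_neg_le2) auto
  have "phi q t \<le> 1 * (2/(q/t^5)^2) / t^3"
    unfolding phi_def EE_def using e assms by (intro divide_right_mono mult_mono) auto
  also have "\<dots> = 2 * t^7 / q^2" using assms by (simp add: field_simps power_eq_if)
  finally show ?thesis .
qed

lemma phi_pos: "0 < phi q t" if "0 < t" using that EE_pos by (simp add: phi_def)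

lemma ibp: assumes q: "0 < q" shows "integral {0<..} (psi q) = 0"
proof -
  define C where "C = 5 * exp 1 + 5 * q * (2 * exp 1 / q^2) + 3 * (exp 1 / q)"
  define a where "a k = 1 / real (Suc k)" for k
  define b where "b k = real (Suc k)" for k
  have ab: "0 < a k" "a k \<le> b k" for k by (auto simp: a_def b_def field_simps)
  define fk where "fk k t = (if t \<in> {a k..b k} then psi q t else 0)" for k t
  have sub: "{a k..b k} \<subseteq> {0<..}" for k using ab(1)[of k] by auto
  have FTC: "(psi q has_integral (phi q (b k) - phi q (a k))) {a k..b k}" for k
  proof (rule fundamental_theorem_of_calculus[OF ab(2)])
    fix x assume "x \<in> {a k..b k}"
    then have "0 < x" using ab(1)[of k] by auto
    then show "(phi q has_vector_derivative psi q x) (at x within {a k..b k})"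
      using deriv_phi[of x q] by (auto simp: has_real_derivative_iff_has_vector_derivative[symmetric]
           intro: has_field_derivative_at_within)
  qed
  have fk_int: "(fk k has_integral (phi q (b k) - phi q (a k))) {0<..}" for k
    unfolding fk_def using has_integral_restrict[OF sub[of k]] FTC by blast
  have lim1: "(\<lambda>k. integral {0<..} (fk k)) \<longlonglongrightarrow> integral {0<..} (psi q)"
  proof (rule dominated_convergence(2))
    show "fk k integrable_on {0<..}" for k using fk_int by blast
    show "(\<lambda>t. C * gd t) integrable_on {0<..}"
      using integrable_on_cmult_left[OF gd_integrable, of C] by simp
    show "norm (fk k t) \<le> C * gd t" if "t \<in> {0<..}" for k t
      using psi_bound[OF q, of t] that gd_pos[of t] unfolding C_def fk_def
      by (auto intro: mult_nonneg_nonneg)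
    show "(\<lambda>k. fk k t) \<longlonglongrightarrow> psi q t" if t: "t \<in> {0<..}" for t
    proof -
      have "eventually (\<lambda>k. fk k t = psi q t) sequentially"
      proof -
        obtain N :: nat where N: "t \<le> real N" "1/t \<le> real N"
          using reals_Archimedean2[of "max t (1/t)"] by (auto intro: less_imp_le)
        have "fk k t = psi q t" if "k \<ge> N" for k
        proof -
          have "t \<le> b k" using N that by (simp add: b_def)
          moreover have "a k \<le> t"
          proof -
            have "1/t \<le> real (Suc k)" using N that by simp
            then show ?thesis using t by (simp add: a_def field_simps)
          qed
          ultimately show ?thesis by (simp add: fk_def)
        qed
        then show ?thesis by (auto simp: eventually_sequentially)
      qed
      then show ?thesis by (rule tendsto_eventually)
    qed
  qed
  have lim2: "(\<lambda>k. integral {0<..} (fk k)) \<longlonglongrightarrow> 0"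
  proof -
    have eq: "integral {0<..} (fk k) = phi q (b k) - phi q (a k)" for k
      using fk_int by (rule integral_unique)
    have pb: "(\<lambda>k. phi q (b k)) \<longlonglongrightarrow> 0"
    proof (rule tendsto_sandwich[of "\<lambda>_. 0" _ _ "\<lambda>k. inverse (real (Suc k))"])
      show "eventually (\<lambda>k. 0 \<le> phi q (b k)) sequentially"
        using phi_pos[of "b _" q] by (auto simp: b_def less_imp_le)
      show "eventually (\<lambda>k. phi q (b k) \<le> inverse (real (Suc k))) sequentially"
      proof (intro always_eventually allI)
        fix k
        have "phi q (b k) \<le> 1 / (b k)^3" using phi_le1[of "b k" q] q by (simp add: b_def)
        also have "\<dots> \<le> 1 / b k"
        proof -
          have "(b k)^1 \<le> (b k)^3" by (intro power_increasing) (auto simp: b_def)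
          then show ?thesis by (intro divide_left_mono) (auto simp: b_def)
        qed
        finally show "phi q (b k) \<le> inverse (real (Suc k))" by (simp add: b_def field_simps)
      qed
    qed (use LIMSEQ_inverse_real_of_nat in simp_all)
    have pa: "(\<lambda>k. phi q (a k)) \<longlonglongrightarrow> 0"
    proof (rule tendsto_sandwich[of "\<lambda>_. 0" _ _ "\<lambda>k. 2 / q^2 * inverse (real (Suc k))"])
      show "eventually (\<lambda>k. 0 \<le> phi q (a k)) sequentially"
        using phi_pos[of "a _" q] ab by (auto simp: less_imp_le)
      show "eventually (\<lambda>k. phi q (a k) \<le> 2 / q^2 * inverse (real (Suc k))) sequentially"
      proof (intro always_eventually allI)
        fix k
        have "phi q (a k) \<le> 2 * (a k)^7 / q^2" using phi_le2[of "a k" q] q ab by simp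
        also have "\<dots> \<le> 2 * (a k)^1 / q^2"
        proof -
          have "(a k)^7 \<le> (a k)^1" by (intro power_decreasing) (auto simp: a_def)
          then show ?thesis using q by (intro divide_right_mono mult_left_mono) auto
        qed
        finally show "phi q (a k) \<le> 2 / q^2 * inverse (real (Suc k))" by (simp add: a_def field_simps)
      qed
      show "(\<lambda>k. 2 / q^2 * inverse (real (Suc k))) \<longlonglongrightarrow> 0"
        using tendsto_mult_right_zero[OF LIMSEQ_inverse_real_of_nat, of "2/q^2"] by simp
    qed auto
    show ?thesis unfolding eq using tendsto_diff[OF pb pa] by simp
  qed
  show ?thesis using LIMSEQ_unique[OF lim1 lim2] .
qed

lemma IBP_G: assumes r: "0 < r" shows "Gf r = (r^10/100) * Kf r - 3/5 * Hf r"
proof -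
  define q where "q = r^10/100"
  have q: "0 < q" using r by (simp add: q_def)
  have "0 = integral {0<..} (psi q)" using ibp[OF q] by simp
  also have "\<dots> = -5 * integral {0<..} (kG q) + 5 * q * integral {0<..} (kK q) - 3 * integral {0<..} (kH q)"
    by (rule psi_integral[OF q])
  finally show ?thesis by (simp add: Gf_def Hf_def Kf_def q_def[symmetric])
qed

lemma Gf_pos: "0 < Gf 1"
proof -
  have int12: "kG (1/100) integrable_on {1..2}"
    unfolding kG_def EE_def by (intro integrable_continuous_real continuous_intros) auto
  have low: "exp (-33) \<le> kG (1/100) t" if t: "t \<in> {1..2}" for t
  proof -
    have "t^5 \<le> 2^5" using t by (intro power_mono) auto
    moreover have "1 \<le> t^5" using t by simp
    moreover have "(1/100)/t^5 \<le> 1"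
    proof -
      have "0 < t^5" using \<open>1 \<le> t^5\<close> by linarith
      then show ?thesis using \<open>1 \<le> t^5\<close> by (simp add: divide_le_eq)
    qed
    ultimately have "-(33::real) \<le> -(t^5) - (1/100)/t^5" by simp
    then have "exp (-33) \<le> exp (-(t^5) - (1/100)/t^5)" by simp
    also have "\<dots> = EE (1/100) t" by (simp add: EE_def exp_diff exp_minus field_simps)
    also have "\<dots> \<le> t * EE (1/100) t" using t EE_pos[of "1/100" t] by (simp add: mult_le_cancel_right1)
    finally show ?thesis by (simp add: kG_def)
  qed
  have "integral {1..2::real} (\<lambda>_. exp (-33)) \<le> integral {1..2} (kG (1/100))"
    using integral_le[OF integrable_const_ivl[of "exp (-33)" 1 2] int12] low by simp
  then have "exp (-33) \<le> integral {1..2} (kG (1/100))" by simp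
  also have "\<dots> \<le> integral {0<..} (kG (1/100))"
    by (rule integral_subset_le) (auto intro!: kG_int simp: kG_def EE_pos int12 less_imp_le)
  finally have "exp (-33) \<le> Gf 1" by (simp add: Gf_def)
  moreover have "0 < exp (-33::real)" by simp
  ultimately show ?thesis by linarith
qed




definition ff :: "real \<Rightarrow> real" where "ff r = Gf r"
definition f1 :: "real \<Rightarrow> real" where "f1 r = -(r^9/10) * Hf r"
definition f2 :: "real \<Rightarrow> real" where "f2 r = r^8 * Gf r - 3/10 * (r^8 * Hf r)"

lemma DERIV_ff: "0 < r \<Longrightarrow> (ff has_real_derivative f1 r) (at r)"
  using DERIV_Gf[of r] by (simp add: ff_def[abs_def] f1_def)

lemma DERIV_f1: assumes r: "0 < r" shows "(f1 has_real_derivative f2 r) (at r)"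
proof -
  have "((\<lambda>x. -(x^9/10) * Hf x) has_real_derivative
          -(9 * r^8 / 10) * Hf r + (-(r^9/10)) * (-(r^9/10) * Kf r)) (at r)"
    by (rule derivative_eq_intros DERIV_Hf[OF r] refl | simp)+
  moreover have "-(9 * r^8 / 10) * Hf r + (-(r^9/10)) * (-(r^9/10) * Kf r) = f2 r"
  proof -
    have "(-(r^9/10)) * (-(r^9/10) * Kf r) = r^8 * ((r^10/100) * Kf r)" by (simp add: power_eq_if)
    also have "(r^10/100) * Kf r = Gf r + 3/5 * Hf r" using IBP_G[OF r] by simp
    finally show ?thesis by (simp add: f2_def algebra_simps)
  qed
  ultimately show ?thesis by (simp add: f1_def[abs_def])
qed

lemma f2_eq: "0 < r \<Longrightarrow> f2 r = 3 * f1 r / r + r^8 * ff r"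
  by (simp add: f2_def f1_def ff_def field_simps power_eq_if)

lemma r8G_bound: assumes r: "0 < r"
  shows "\<bar>r^8 * Gf r\<bar> \<le> integral {0<..} (\<lambda>t. 100 * exp 1 * gd t)"
proof -
  have "r^8 * Gf r = integral {0<..} (\<lambda>t. r^8 * kG (r^10/100) t)" by (simp add: Gf_def)
  also have "norm \<dots> \<le> integral {0<..} (\<lambda>t. 100 * exp 1 * gd t)"
  proof (rule integral_norm_bound_integral)
    show "(\<lambda>t. r^8 * kG (r^10/100) t) integrable_on {0<..}"
      using integrable_on_cmult_left[OF kG_int, of "r^10/100" "r^8"] r by simp
    show "(\<lambda>t. 100 * exp 1 * gd t) integrable_on {0<..}"
      using integrable_on_cmult_left[OF gd_integrable, of "100 * exp 1"] by simp
    show "norm (r^8 * kG (r^10/100) t) \<le> 100 * exp 1 * gd t" if "t \<in> {0<..}" for t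
      using r8_kG[OF r, of t] that by simp
  qed
  finally show ?thesis by simp
qed

lemma r8H_bound: assumes r: "0 < r"
  shows "\<bar>r^8 * Hf r\<bar> \<le> integral {0<..} (\<lambda>t. 100 * exp 1 * gd t)"
proof -
  have "r^8 * Hf r = integral {0<..} (\<lambda>t. r^8 * kH (r^10/100) t)" by (simp add: Hf_def)
  also have "norm \<dots> \<le> integral {0<..} (\<lambda>t. 100 * exp 1 * gd t)"
  proof (rule integral_norm_bound_integral)
    show "(\<lambda>t. r^8 * kH (r^10/100) t) integrable_on {0<..}"
      using integrable_on_cmult_left[OF kH_int, of "r^10/100" "r^8"] r by simp
    show "(\<lambda>t. 100 * exp 1 * gd t) integrable_on {0<..}"
      using integrable_on_cmult_left[OF gd_integrable, of "100 * exp 1"] by simp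
    show "norm (r^8 * kH (r^10/100) t) \<le> 100 * exp 1 * gd t" if "t \<in> {0<..}" for t
      using r8_kH[OF r, of t] that by simp
  qed
  finally show ?thesis by simp
qed

lemma f2_bounded: "\<exists>C. \<forall>r>0. \<bar>f2 r\<bar> \<le> C"
proof (intro exI allI impI)
  fix r :: real assume r: "0 < r"
  let ?B = "integral {0<..} (\<lambda>t. 100 * exp 1 * gd t)"
  have "\<bar>f2 r\<bar> \<le> \<bar>r^8 * Gf r\<bar> + 3/10 * \<bar>r^8 * Hf r\<bar>" unfolding f2_def
    using abs_triangle_ineq4[of "r^8 * Gf r" "3/10 * (r^8 * Hf r)"] by (simp add: abs_mult)
  also have "\<dots> \<le> ?B + 3/10 * ?B" using r8G_bound[OF r] r8H_bound[OF r] by linarith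
  finally show "\<bar>f2 r\<bar> \<le> ?B + 3/10 * ?B" .
qed

lemma f2_nonzero: "\<exists>r>0. f2 r \<noteq> 0"
proof (rule ccontr)
  assume "\<not> (\<exists>r>0. f2 r \<noteq> 0)"
  then have z: "\<And>r. 0 < r \<Longrightarrow> f2 r = 0" by auto
  have "\<exists>c. \<forall>x\<in>{0<..}. f1 x = c"
  proof (rule has_field_derivative_zero_constant)
    show "convex {0::real<..}" by simp
    show "(f1 has_field_derivative 0) (at x within {0<..})" if "x \<in> {0<..}" for x
      using DERIV_f1[of x] z[of x] that by (auto intro: has_field_derivative_at_within)
  qed
  then obtain c where c: "\<And>x. 0 < x \<Longrightarrow> f1 x = c" by auto
  have ffx: "ff x = -3 * c / x^9" if "0 < x" for x
  proof -
    have "0 = 3 * c / x + x^8 * ff x" using f2_eq[OF that] z[OF that] c[OF that] by simp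
    then show ?thesis using that by (simp add: field_simps power_eq_if)
  qed
  have "(ff has_real_derivative c) (at 1)" using DERIV_ff[of 1] c[of 1] by simp
  then have "((\<lambda>x. -3 * c / x^9) has_real_derivative c) (at 1)"
    by (rule has_field_derivative_transform_within_open[of _ _ _ "{0<..}"]) (use ffx in auto)
  moreover have "((\<lambda>x. -3 * c / x^9) has_real_derivative 27 * c) (at 1)"
    by (rule derivative_eq_intros refl | simp)+
  ultimately have "c = 27 * c" by (rule DERIV_unique)
  then have "c = 0" by simp
  then have "ff 1 = 0" using ffx[of 1] by simp
  then show False using Gf_pos by (simp add: ff_def)
qed




type_synonym R4 = "real \<times> real \<times> real \<times> real"

definition gA :: "R4 \<Rightarrow> real" where "gA x = 1 / (1 - fst x)"
definition gR :: "R4 \<Rightarrow> real" where "gR x = fst (snd (snd x))"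
definition gRi :: "R4 \<Rightarrow> real" where "gRi x = 1 / fst (snd (snd x))"
definition gC :: "R4 \<Rightarrow> real" where "gC x = cos (snd (snd (snd x)))"
definition gS :: "R4 \<Rightarrow> real" where "gS x = sin (snd (snd (snd x)))"
definition gF :: "R4 \<Rightarrow> real" where "gF x = ff (fst (snd (snd x)))"
definition gF1 :: "R4 \<Rightarrow> real" where "gF1 x = f1 (fst (snd (snd x)))"

inductive_set fam :: "(R4 \<Rightarrow> real) set" where
  fconst: "(\<lambda>x. c) \<in> fam"
| fA: "gA \<in> fam" | fR: "gR \<in> fam" | fRi: "gRi \<in> fam" | fC: "gC \<in> fam" | fS: "gS \<in> fam"
| fF: "gF \<in> fam" | fF1: "gF1 \<in> fam"
| fadd: "g \<in> fam \<Longrightarrow> h \<in> fam \<Longrightarrow> (\<lambda>x. g x + h x) \<in> fam"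
| fmul: "g \<in> fam \<Longrightarrow> h \<in> fam \<Longrightarrow> (\<lambda>x. g x * h x) \<in> fam"

definition UU :: "R4 set" where "UU = {x. fst x < 1 \<and> 0 < fst (snd (snd x))}"

lemma open_UU: "open UU"
  unfolding UU_def by (intro open_Collect_conj open_Collect_less continuous_intros)

lemma coord_t: "fst (x + s *\<^sub>R b) = fst x + s * fst b" by simp
lemma coord_r: "fst (snd (snd (x + s *\<^sub>R b))) = fst (snd (snd x)) + s * fst (snd (snd b))" by simp
lemma coord_y: "snd (snd (snd (x + s *\<^sub>R b))) = snd (snd (snd x)) + s * snd (snd (snd b))" by simp

lemma dd_lin: assumes "(\<phi> has_real_derivative D) (at u)"
  shows "((\<lambda>s. \<phi> (u + s * c)) has_real_derivative D * c) (at 0)"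
proof -
  have "((\<lambda>s. \<phi> (u + s * c)) has_real_derivative D * (0 + 1 * c)) (at 0)"
    by (rule DERIV_chain2[where f=\<phi>]) (use assms in \<open>auto intro!: derivative_eq_intros\<close>)
  then show ?thesis by simp
qed

lemma fam_neg: "g \<in> fam \<Longrightarrow> (\<lambda>x. - g x) \<in> fam"
  using fmul[OF fconst[of "-1"]] by simp
lemma fam_cmul: "g \<in> fam \<Longrightarrow> (\<lambda>x. c * g x) \<in> fam"
  using fmul[OF fconst[of c]] by simp
lemma fam_pow: "g \<in> fam \<Longrightarrow> (\<lambda>x. g x ^ n) \<in> fam"
proof (induction n)
  case 0 then show ?case using fconst[of 1] by simp
next
  case (Suc n) then show ?case using fmul[OF Suc.prems Suc.IH] by simp
qed

lemma cont_ff: "continuous_on {0<..} ff"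
  using DERIV_ff by (intro continuous_at_imp_continuous_on) (auto intro: DERIV_isCont)
lemma cont_f1: "continuous_on {0<..} f1"
  using DERIV_f1 by (intro continuous_at_imp_continuous_on) (auto intro: DERIV_isCont)

lemma fam_main: "g \<in> fam \<Longrightarrow> continuous_on UU g \<and>
    (\<forall>b. \<exists>g'\<in>fam. \<forall>x\<in>UU. ((\<lambda>s. g (x + s *\<^sub>R b)) has_real_derivative g' x) (at 0))"
proof (induction rule: fam.induct)
  case (fconst c)
  then show ?case by (auto intro!: bexI[of _ "\<lambda>x. 0"] fam.fconst)
next
  case fA
  have c: "continuous_on UU gA" unfolding gA_def UU_def by (intro continuous_intros) auto
  have "\<exists>g'\<in>fam. \<forall>x\<in>UU. ((\<lambda>s. gA (x + s *\<^sub>R b)) has_real_derivative g' x) (at 0)" for b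
  proof (intro bexI[of _ "\<lambda>x. gA x * gA x * fst b"] ballI)
    show "(\<lambda>x. gA x * gA x * fst b) \<in> fam" by (intro fam.fmul fam.fA fam.fconst)
    fix x assume x: "x \<in> UU"
    have "((\<lambda>u. 1 / (1 - u)) has_real_derivative gA x * gA x) (at (fst x))"
      using x by (auto intro!: derivative_eq_intros simp: gA_def UU_def power2_eq_square)
    from dd_lin[OF this, of "fst b"] show "((\<lambda>s. gA (x + s *\<^sub>R b)) has_real_derivative gA x * gA x * fst b) (at 0)"
      by (simp add: gA_def)
  qed
  then show ?case using c by blast
next
  case fR
  have c: "continuous_on UU gR" unfolding gR_def by (intro continuous_intros)
  have "\<exists>g'\<in>fam. \<forall>x\<in>UU. ((\<lambda>s. gR (x + s *\<^sub>R b)) has_real_derivative g' x) (at 0)" for b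
  proof (intro bexI[of _ "\<lambda>x. fst (snd (snd b))"] ballI)
    show "(\<lambda>x. fst (snd (snd b))) \<in> fam" by (rule fam.fconst)
    fix x assume x: "x \<in> UU"
    from dd_lin[where \<phi>="\<lambda>u. u" and u="fst (snd (snd x))", OF DERIV_ident, of "fst (snd (snd b))"]
    show "((\<lambda>s. gR (x + s *\<^sub>R b)) has_real_derivative fst (snd (snd b))) (at 0)"
      by (simp add: gR_def)
  qed
  then show ?case using c by blast
next
  case fRi
  have c: "continuous_on UU gRi" unfolding gRi_def UU_def by (intro continuous_intros) auto
  have "\<exists>g'\<in>fam. \<forall>x\<in>UU. ((\<lambda>s. gRi (x + s *\<^sub>R b)) has_real_derivative g' x) (at 0)" for b
  proof (intro bexI[of _ "\<lambda>x. (- fst (snd (snd b))) * (gRi x * gRi x)"] ballI)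
    show "(\<lambda>x. (- fst (snd (snd b))) * (gRi x * gRi x)) \<in> fam" by (intro fam.fmul fam.fRi fam.fconst)
    fix x assume x: "x \<in> UU"
    have "((\<lambda>u. 1 / u) has_real_derivative - (gRi x * gRi x)) (at (fst (snd (snd x))))"
      using x by (auto intro!: derivative_eq_intros simp: gRi_def UU_def power2_eq_square)
    from dd_lin[OF this, of "fst (snd (snd b))"]
    show "((\<lambda>s. gRi (x + s *\<^sub>R b)) has_real_derivative (- fst (snd (snd b))) * (gRi x * gRi x)) (at 0)"
      by (simp add: gRi_def mult_ac)
  qed
  then show ?case using c by blast
next
  case fC
  have c: "continuous_on UU gC" unfolding gC_def by (intro continuous_intros)
  have "\<exists>g'\<in>fam. \<forall>x\<in>UU. ((\<lambda>s. gC (x + s *\<^sub>R b)) has_real_derivative g' x) (at 0)" for b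
  proof (intro bexI[of _ "\<lambda>x. (- snd (snd (snd b))) * gS x"] ballI)
    show "(\<lambda>x. (- snd (snd (snd b))) * gS x) \<in> fam" by (intro fam.fmul fam.fS fam.fconst)
    fix x assume x: "x \<in> UU"
    from dd_lin[OF DERIV_cos[of "snd (snd (snd x))"], of "snd (snd (snd b))"]
    show "((\<lambda>s. gC (x + s *\<^sub>R b)) has_real_derivative (- snd (snd (snd b))) * gS x) (at 0)"
      by (simp add: gC_def gS_def mult_ac)
  qed
  then show ?case using c by blast
next
  case fS
  have c: "continuous_on UU gS" unfolding gS_def by (intro continuous_intros)
  have "\<exists>g'\<in>fam. \<forall>x\<in>UU. ((\<lambda>s. gS (x + s *\<^sub>R b)) has_real_derivative g' x) (at 0)" for b
  proof (intro bexI[of _ "\<lambda>x. snd (snd (snd b)) * gC x"] ballI)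
    show "(\<lambda>x. snd (snd (snd b)) * gC x) \<in> fam" by (intro fam.fmul fam.fC fam.fconst)
    fix x assume x: "x \<in> UU"
    from dd_lin[OF DERIV_sin[of "snd (snd (snd x))"], of "snd (snd (snd b))"]
    show "((\<lambda>s. gS (x + s *\<^sub>R b)) has_real_derivative snd (snd (snd b)) * gC x) (at 0)"
      by (simp add: gC_def gS_def mult_ac)
  qed
  then show ?case using c by blast
next
  case fF
  have c: "continuous_on UU gF" unfolding gF_def UU_def
    by (rule continuous_on_compose2[OF cont_ff]) (auto intro!: continuous_intros)
  have "\<exists>g'\<in>fam. \<forall>x\<in>UU. ((\<lambda>s. gF (x + s *\<^sub>R b)) has_real_derivative g' x) (at 0)" for b
  proof (intro bexI[of _ "\<lambda>x. fst (snd (snd b)) * gF1 x"] ballI)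
    show "(\<lambda>x. fst (snd (snd b)) * gF1 x) \<in> fam" by (intro fam.fmul fam.fF1 fam.fconst)
    fix x assume x: "x \<in> UU"
    from dd_lin[OF DERIV_ff[of "fst (snd (snd x))"], of "fst (snd (snd b))"] x
    show "((\<lambda>s. gF (x + s *\<^sub>R b)) has_real_derivative fst (snd (snd b)) * gF1 x) (at 0)"
      by (simp add: gF_def gF1_def UU_def mult_ac)
  qed
  then show ?case using c by blast
next
  case fF1
  have c: "continuous_on UU gF1" unfolding gF1_def UU_def
    by (rule continuous_on_compose2[OF cont_f1]) (auto intro!: continuous_intros)
  have "\<exists>g'\<in>fam. \<forall>x\<in>UU. ((\<lambda>s. gF1 (x + s *\<^sub>R b)) has_real_derivative g' x) (at 0)" for b
  proof (intro bexI[of _ "\<lambda>x. fst (snd (snd b)) * (3 * gF1 x * gRi x + gR x ^ 8 * gF x)"] ballI)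
    show "(\<lambda>x. fst (snd (snd b)) * (3 * gF1 x * gRi x + gR x ^ 8 * gF x)) \<in> fam"
      by (intro fam.fmul fam.fadd fam.fF1 fam.fF fam.fRi fam.fconst fam_pow fam.fR)
    fix x assume x: "x \<in> UU"
    have r: "0 < fst (snd (snd x))" using x by (simp add: UU_def)
    from dd_lin[OF DERIV_f1[OF r], of "fst (snd (snd b))"] f2_eq[OF r]
    show "((\<lambda>s. gF1 (x + s *\<^sub>R b)) has_real_derivative
            fst (snd (snd b)) * (3 * gF1 x * gRi x + gR x ^ 8 * gF x)) (at 0)"
      by (simp add: gF_def gF1_def gRi_def gR_def mult_ac)
  qed
  then show ?case using c by blast
next
  case (fadd g h)
  have c: "continuous_on UU (\<lambda>x. g x + h x)" using fadd.IH by (intro continuous_intros) auto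
  have "\<exists>g'\<in>fam. \<forall>x\<in>UU. ((\<lambda>s. g (x + s *\<^sub>R b) + h (x + s *\<^sub>R b)) has_real_derivative g' x) (at 0)" for b
  proof -
    obtain g' where g': "g' \<in> fam" "\<forall>x\<in>UU. ((\<lambda>s. g (x + s *\<^sub>R b)) has_real_derivative g' x) (at 0)"
      using fadd.IH(1) by blast
    obtain h' where h': "h' \<in> fam" "\<forall>x\<in>UU. ((\<lambda>s. h (x + s *\<^sub>R b)) has_real_derivative h' x) (at 0)"
      using fadd.IH(2) by blast
    show ?thesis
      by (intro bexI[of _ "\<lambda>x. g' x + h' x"] ballI fam.fadd g'(1) h'(1) DERIV_add)
         (use g'(2) h'(2) in auto)
  qed
  then show ?case using c by blast
next
  case (fmul g h)
  have c: "continuous_on UU (\<lambda>x. g x * h x)" using fmul.IH by (intro continuous_intros) auto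
  have "\<exists>g'\<in>fam. \<forall>x\<in>UU. ((\<lambda>s. g (x + s *\<^sub>R b) * h (x + s *\<^sub>R b)) has_real_derivative g' x) (at 0)" for b
  proof -
    obtain g' where g': "g' \<in> fam" "\<forall>x\<in>UU. ((\<lambda>s. g (x + s *\<^sub>R b)) has_real_derivative g' x) (at 0)"
      using fmul.IH(1) by blast
    obtain h' where h': "h' \<in> fam" "\<forall>x\<in>UU. ((\<lambda>s. h (x + s *\<^sub>R b)) has_real_derivative h' x) (at 0)"
      using fmul.IH(2) by blast
    show ?thesis
    proof (intro bexI[of _ "\<lambda>x. g' x * h x + g x * h' x"] ballI)
      show "(\<lambda>x. g' x * h x + g x * h' x) \<in> fam" using g'(1) h'(1) fmul.hyps by (intro fam.fadd fam.fmul)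
      fix x assume x: "x \<in> UU"
      have "((\<lambda>s. g (x + s *\<^sub>R b) * h (x + s *\<^sub>R b)) has_real_derivative
              g' x * h (x + 0 *\<^sub>R b) + h' x * g (x + 0 *\<^sub>R b)) (at 0)"
        using g'(2) h'(2) x by (intro DERIV_mult) auto
      then show "((\<lambda>s. g (x + s *\<^sub>R b) * h (x + s *\<^sub>R b)) has_real_derivative g' x * h x + g x * h' x) (at 0)"
        by (simp add: mult_ac)
    qed
  qed
  then show ?case using c by blast
qed

lemma fam_C_inf: "g \<in> fam \<Longrightarrow> C_inf_on UU g"
  unfolding C_inf_on_def using fam_main by blast




definition vth0 :: "R4 \<Rightarrow> real" where "vth0 = (\<lambda>x. 0)"
definition vrr :: "R4 \<Rightarrow> real" where "vrr = (\<lambda>x. gA x * gF1 x * gC x)"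
definition vyy :: "R4 \<Rightarrow> real" where "vyy = (\<lambda>x. - (gA x * (gR x ^ 8 * gF x * gS x)))"
definition pp :: "R4 \<Rightarrow> real" where
  "pp = (\<lambda>x. - (gA x ^ 2 * (gF x * gC x + (gF1 x ^ 2 * gC x ^ 2 + gR x ^ 8 * gF x ^ 2 * gS x ^ 2) / 2)))"

lemma fam_div: "g \<in> fam \<Longrightarrow> (\<lambda>x. g x / c) \<in> fam"
  using fam_cmul[of g "1/c"] by simp

lemma fam_sol: "vth0 \<in> fam" "vrr \<in> fam" "vyy \<in> fam" "pp \<in> fam"
  unfolding vth0_def vrr_def vyy_def pp_def
  by (intro fam.fconst fam_neg fam_div fam.fadd fam.fmul fam_pow fam.fA fam.fR fam.fC fam.fS fam.fF fam.fF1)+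

lemma pd_I: "((\<lambda>s. g (x + s *\<^sub>R b)) has_real_derivative D) (at 0) \<Longrightarrow> pd b g x = D"
  unfolding pd_def by (rule DERIV_imp_deriv)

lemma ff_chain[derivative_intros]:
  "(g has_real_derivative g') (at x) \<Longrightarrow> 0 < g x \<Longrightarrow> ((\<lambda>x. ff (g x)) has_real_derivative f1 (g x) * g') (at x)"
  by (rule DERIV_chain2[OF DERIV_ff])
lemma f1_chain[derivative_intros]:
  "(g has_real_derivative g') (at x) \<Longrightarrow> 0 < g x \<Longrightarrow> ((\<lambda>x. f1 (g x)) has_real_derivative f2 (g x) * g') (at x)"
  by (rule DERIV_chain2[OF DERIV_f1])

lemma sh: "(t,th,r,y) + s *\<^sub>R e_t = (t + s, th, r, y)"
          "(t,th,r,y) + s *\<^sub>R e_th = (t, th + s, r, y)"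
          "(t,th,r,y) + s *\<^sub>R e_r = (t, th, r + s, y)"
          "(t,th,r,y) + s *\<^sub>R e_y = (t, th, r, y + s)"
  by (simp_all add: e_t_def e_th_def e_r_def e_y_def)

lemmas gdefs = gA_def gR_def gC_def gS_def gF_def gF1_def

lemma pd_vth: "pd b vth0 x = 0"
  by (rule pd_I) (simp add: vth0_def)

context
  fixes t th r y :: real
  assumes t: "t < 1" and r: "0 < r"
begin

lemma t1: "1 - t \<noteq> 0" "(1 - t) * (1 - t) \<noteq> 0" "1 - t > 0" using t by auto

lemma pd_vr1: "pd e_t vrr (t,th,r,y) = (1/(1-t))^2 * f1 r * cos y"
  by (rule pd_I, simp add: sh vrr_def gdefs, rule DERIV_cong,
      (use t r in \<open>auto intro!: derivative_eq_intros\<close>)[1],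
      use t1 r in \<open>simp add: field_simps power2_eq_square\<close>)

lemma pd_vr2: "pd e_th vrr (t,th,r,y) = 0"
  by (rule pd_I) (simp add: sh vrr_def gdefs)

lemma pd_vr3: "pd e_r vrr (t,th,r,y) = 1/(1-t) * f2 r * cos y"
  by (rule pd_I, simp add: sh vrr_def gdefs, rule DERIV_cong,
      (use t r in \<open>auto intro!: derivative_eq_intros\<close>)[1],
      use t1 r in \<open>simp add: field_simps power2_eq_square\<close>)

lemma pd_vr4: "pd e_y vrr (t,th,r,y) = - (1/(1-t) * f1 r * sin y)"
  by (rule pd_I, simp add: sh vrr_def gdefs, rule DERIV_cong,
      (use t r in \<open>auto intro!: derivative_eq_intros\<close>)[1],
      use t1 r in \<open>simp add: field_simps power2_eq_square\<close>)

lemma pd_vy1: "pd e_t vyy (t,th,r,y) = - ((1/(1-t))^2 * (r^8 * ff r * sin y))"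
  by (rule pd_I, simp add: sh vyy_def gdefs, rule DERIV_cong,
      (use t r in \<open>auto intro!: derivative_eq_intros\<close>)[1],
      use t1 r in \<open>simp add: field_simps power2_eq_square\<close>)

lemma pd_vy2: "pd e_th vyy (t,th,r,y) = 0"
  by (rule pd_I) (simp add: sh vyy_def gdefs)

lemma pd_vy3: "pd e_r vyy (t,th,r,y) = - (1/(1-t) * ((8 * r^7 * ff r + r^8 * f1 r) * sin y))"
  by (rule pd_I, simp add: sh vyy_def gdefs, rule DERIV_cong,
      (use t r in \<open>auto intro!: derivative_eq_intros\<close>)[1],
      use t1 r in \<open>simp add: field_simps power2_eq_square\<close>)

lemma pd_vy4: "pd e_y vyy (t,th,r,y) = - (1/(1-t) * (r^8 * ff r * cos y))"
  by (rule pd_I, simp add: sh vyy_def gdefs, rule DERIV_cong,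
      (use t r in \<open>auto intro!: derivative_eq_intros\<close>)[1],
      use t1 r in \<open>simp add: field_simps power2_eq_square\<close>)

lemma pd_p1: "pd e_th pp (t,th,r,y) = 0"
  by (rule pd_I) (simp add: sh pp_def gdefs)

lemma pd_p2: "pd e_r pp (t,th,r,y) = - ((1/(1-t))^2 * (f1 r * cos y + (2 * f1 r * f2 r * (cos y)^2
        + 8 * r^7 * (ff r)^2 * (sin y)^2 + 2 * r^8 * ff r * f1 r * (sin y)^2) / 2))"
  by (rule pd_I, simp add: sh pp_def gdefs, rule DERIV_cong,
      (use t r in \<open>auto intro!: derivative_eq_intros\<close>)[1],
      use t1 r in \<open>simp add: field_simps power2_eq_square\<close>)

lemma pd_p3: "pd e_y pp (t,th,r,y) = - ((1/(1-t))^2 * (- (ff r * sin y) + (- (2 * (f1 r)^2 * cos y * sin y)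
        + 2 * r^8 * (ff r)^2 * sin y * cos y) / 2))"
  by (rule pd_I, simp add: sh pp_def gdefs, rule DERIV_cong,
      (use t r in \<open>auto intro!: derivative_eq_intros\<close>)[1],
      use t1 r in \<open>simp add: field_simps power2_eq_square\<close>)

end




lemma euler_sol: "euler_N 1 vth0 vrr vyy pp"
  unfolding euler_N_def Let_def
proof (intro ballI)
  fix x assume "x \<in> dom_N 1"
  then obtain t th r y where x: "x = (t, th, r, y)" and t: "0 \<le> t" "t < 1" and r: "0 < r"
    by (auto simp: dom_N_def)
  have t1: "1 - t \<noteq> 0" using t by simp
  define a where "a = 1/(1-t)"
  have r0: "r \<noteq> 0" using r by simp
  note pds = pd_vth pd_vr1[OF t(2) r] pd_vr2[OF t(2) r] pd_vr3[OF t(2) r] pd_vr4[OF t(2) r]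
    pd_vy1[OF t(2) r] pd_vy2[OF t(2) r] pd_vy3[OF t(2) r] pd_vy4[OF t(2) r]
    pd_p1[OF t(2) r] pd_p2[OF t(2) r] pd_p3[OF t(2) r]
  have vals: "vth0 (t,th,r,y) = 0" "vrr (t,th,r,y) = 1/(1-t) * f1 r * cos y"
     "vyy (t,th,r,y) = - (1/(1-t) * (r^8 * ff r * sin y))"
    by (simp_all add: vth0_def vrr_def vyy_def gdefs)
  have e1: "pd e_t vth0 x + (vth0 x * pd e_th vth0 x + vrr x * pd e_r vth0 x + vyy x * pd e_y vth0 x)
     + 2 * vth0 x * vrr x / r = - (pd e_th pp x / r^2)"
    by (simp add: x pds, simp add: vth0_def)
  have e2: "pd e_t vrr x + (vth0 x * pd e_th vrr x + vrr x * pd e_r vrr x + vyy x * pd e_y vrr x)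
     - r * (vth0 x)^2 + 4 * (vyy x)^2 / r^9 = - pd e_r pp x"
    unfolding x pds vals a_def[symmetric] using r0 by (simp add: field_simps, (algebra)?)
  have e3: "pd e_t vyy x + (vth0 x * pd e_th vyy x + vrr x * pd e_r vyy x + vyy x * pd e_y vyy x)
     - 8 * vrr x * vyy x / r = - (r^8 * pd e_y pp x)"
    unfolding x pds vals a_def[symmetric] using r0 by (simp add: field_simps, (algebra)?)
  have e4: "pd e_th vth0 x + pd e_r vrr x + pd e_y vyy x - 3 * vrr x / r = 0"
    unfolding x pds vals a_def[symmetric] f2_eq[OF r] using r0 by (simp add: field_simps, (algebra)?)
  show "pd e_t vth0 x + (vth0 x * pd e_th vth0 x + vrr x * pd e_r vth0 x + vyy x * pd e_y vth0 x)
     + 2 * vth0 x * vrr x / fst (snd (snd x)) = - (pd e_th pp x / fst (snd (snd x))^2) \<and>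
    pd e_t vrr x + (vth0 x * pd e_th vrr x + vrr x * pd e_r vrr x + vyy x * pd e_y vrr x)
     - fst (snd (snd x)) * (vth0 x)^2 + 4 * (vyy x)^2 / fst (snd (snd x))^9 = - pd e_r pp x \<and>
    pd e_t vyy x + (vth0 x * pd e_th vyy x + vrr x * pd e_r vyy x + vyy x * pd e_y vyy x)
     - 8 * vrr x * vyy x / fst (snd (snd x)) = - (fst (snd (snd x))^8 * pd e_y pp x) \<and>
    pd e_th vth0 x + pd e_r vrr x + pd e_y vyy x - 3 * vrr x / fst (snd (snd x)) = 0"
    using e1 e2 e3 e4 by (simp add: x)
qed




lemma periodic_sol: "periodic_N vth0" "periodic_N vrr" "periodic_N vyy" "periodic_N pp"
  unfolding periodic_N_def by (simp_all add: vth0_def vrr_def vyy_def pp_def gdefs)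

lemma dom_sub: "dom_N 1 \<subseteq> UU"
  by (auto simp: dom_N_def UU_def)

theorem corollary3p2:
  shows "\<exists>T::real. 0 < T \<and> (\<exists>vth vr vy p.
     (\<exists>U. open U \<and> dom_N T \<subseteq> U \<and>
          C_inf_on U vth \<and> C_inf_on U vr \<and> C_inf_on U vy \<and> C_inf_on U p) \<and>
     periodic_N vth \<and> periodic_N vr \<and> periodic_N vy \<and> periodic_N p \<and>
     euler_N T vth vr vy p \<and>
     (\<forall>t. 0 \<le> t \<and> t < T \<longrightarrow>
          (\<exists>B. \<forall>th r y. 0 < r \<longrightarrow> \<bar>pd e_r vr (t, th, r, y)\<bar> \<le> B)) \<and>
     (\<forall>M t0. t0 < T \<longrightarrow> (\<exists>t th r y. t0 < t \<and> 0 \<le> t \<and> t < T \<and> 0 < r \<and>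
          M < \<bar>pd e_r vr (t, th, r, y)\<bar>)))"
proof -
  have h1: "\<exists>U. open U \<and> dom_N 1 \<subseteq> U \<and> C_inf_on U vth0 \<and> C_inf_on U vrr \<and> C_inf_on U vyy \<and> C_inf_on U pp"
    using open_UU dom_sub fam_sol by (intro exI[of _ UU]) (auto intro: fam_C_inf)
  note h2 = periodic_sol euler_sol
  obtain C where C: "\<And>r. 0 < r \<Longrightarrow> \<bar>f2 r\<bar> \<le> C" using f2_bounded by blast
  have h3: "\<forall>t. 0 \<le> t \<and> t < 1 \<longrightarrow> (\<exists>B. \<forall>th r y. 0 < r \<longrightarrow> \<bar>pd e_r vrr (t, th, r, y)\<bar> \<le> B)"
  proof (intro allI impI exI[of _ "1/(1-t) * C" for t])
    fix t th r y :: real assume t: "0 \<le> t \<and> t < 1" and r: "0 < r"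
    have "\<bar>pd e_r vrr (t, th, r, y)\<bar> = 1/(1-t) * (\<bar>f2 r\<bar> * \<bar>cos y\<bar>)"
      using pd_vr3[of t r th y] t r by (simp add: abs_mult)
    also have "\<dots> \<le> 1/(1-t) * (C * 1)"
      using t C[OF r] by (intro mult_left_mono mult_mono) auto
    finally show "\<bar>pd e_r vrr (t, th, r, y)\<bar> \<le> 1/(1-t) * C" by simp
  qed
  have h4: "\<forall>M t0. t0 < 1 \<longrightarrow> (\<exists>t th r y. t0 < t \<and> 0 \<le> t \<and> t < 1 \<and> 0 < r \<and> M < \<bar>pd e_r vrr (t, th, r, y)\<bar>)"
  proof (intro allI impI)
    fix M t0 :: real assume t0: "t0 < 1"
    obtain r0 where r0: "0 < r0" "f2 r0 \<noteq> 0" using f2_nonzero by blast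
    define u where "u = max t0 0"
    have u: "u < 1" "0 \<le> u" "t0 \<le> u" using t0 by (auto simp: u_def)
    define d where "d = min ((1 - u)/2) (\<bar>f2 r0\<bar> / (\<bar>M\<bar> + 1))"
    have d: "0 < d" "d \<le> (1 - u)/2" "d \<le> \<bar>f2 r0\<bar> / (\<bar>M\<bar> + 1)"
    proof -
      show "0 < d" using u r0 unfolding d_def by simp
      show "d \<le> (1 - u)/2" unfolding d_def by (rule min.cobounded1)
      show "d \<le> \<bar>f2 r0\<bar> / (\<bar>M\<bar> + 1)" unfolding d_def by (rule min.cobounded2)
    qed
    define t where "t = 1 - d"
    have t: "t0 < t" "0 \<le> t" "t < 1" using d u by (auto simp: t_def)
    have "\<bar>pd e_r vrr (t, 0, r0, 0)\<bar> = \<bar>f2 r0\<bar> / d"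
      using pd_vr3[of t r0 0 0] t r0 by (simp add: t_def abs_mult)
    moreover have "\<bar>M\<bar> + 1 \<le> \<bar>f2 r0\<bar> / d"
      using d r0 by (simp add: field_simps)
    ultimately have "M < \<bar>pd e_r vrr (t, 0, r0, 0)\<bar>" by linarith
    then show "\<exists>t th r y. t0 < t \<and> 0 \<le> t \<and> t < 1 \<and> 0 < r \<and> M < \<bar>pd e_r vrr (t, th, r, y)\<bar>"
      using t r0 by blast
  qed
  show ?thesis
    apply (rule exI[of _ 1])
    apply (rule conjI, simp)
    apply (rule exI[of _ vth0], rule exI[of _ vrr], rule exI[of _ vyy], rule exI[of _ pp])
    using h1 h2 h3 h4 by blast
qed


end
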